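(* Let $G$ be a connected nontrivial graph with $m$ vertices and let $n\geq4$. Then $$\lambda'(G\boxtimes K_n)=\min\{n^2\lambda(G),\ (n-1)(m+2e(G)),\ 2n\delta(G)+2n-4\}.$$
   Context: All graphs are finite, simple and undirected; "nontrivial" means having at least two vertices. $K_n$ denotes the complete graph on $n$ vertices. For a graph $G$: $e(G)=|E(G)|$; $\delta(G)$ is the minimum degree; $\lambda(G)$ is the edge-connectivity. A restricted edge-cut of a connected graph $G$ is a set $S\subseteq E(G)$ such that $G-S$ is disconnected and every component of $G-S$ has at least $2$ vertices; the restricted edge-connectivity $\lambda'(G)$ is the minimum cardinality of a restricted edge-cut. The strong product $G\boxtimes H$ has vertex set $V(G)\times V(H)$, with $(x_1,y_1)$ and $(x_2,y_2)$ adjacent iff either $x_1=x_2$ and $y_1y_2\in E(H)$, or $y_1=y_2$ and $x_1x_2\in E(G)$, or $x_1x_2\in E(G)$ and $y_1y_2\in E(H)$. *)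

theory Defs
  imports Main
begin

definition simple_graph :: "'a set \<Rightarrow> 'a set set \<Rightarrow> bool" where
  "simple_graph V E \<longleftrightarrow> finite V \<and> (\<forall>e\<in>E. e \<subseteq> V \<and> card e = 2)"

definition adj :: "'a set set \<Rightarrow> 'a \<Rightarrow> 'a \<Rightarrow> bool" where
  "adj E x y \<longleftrightarrow> {x, y} \<in> E \<and> x \<noteq> y"

definition reachable :: "'a set \<Rightarrow> 'a set set \<Rightarrow> 'a \<Rightarrow> 'a \<Rightarrow> bool" where
  "reachable V E = (\<lambda>x y. x \<in> V \<and> y \<in> V \<and> adj E x y)\<^sup>*\<^sup>*"

definition connected_graph :: "'a set \<Rightarrow> 'a set set \<Rightarrow> bool" where
  "connected_graph V E \<longleftrightarrow> V \<noteq> {} \<and> (\<forall>x\<in>V. \<forall>y\<in>V. reachable V E x y)"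

definition component :: "'a set \<Rightarrow> 'a set set \<Rightarrow> 'a \<Rightarrow> 'a set" where
  "component V E v = {u \<in> V. reachable V E v u}"

definition degree :: "'a set set \<Rightarrow> 'a \<Rightarrow> nat" where
  "degree E v = card {u. adj E v u}"

definition min_degree :: "'a set \<Rightarrow> 'a set set \<Rightarrow> nat" where
  "min_degree V E = Min (degree E ` V)"

definition edge_connectivity :: "'a set \<Rightarrow> 'a set set \<Rightarrow> nat" where
  "edge_connectivity V E = Min {card S | S. S \<subseteq> E \<and> \<not> connected_graph V (E - S)}"

definition restricted_edge_cut :: "'a set \<Rightarrow> 'a set set \<Rightarrow> 'a set set \<Rightarrow> bool" where
  "restricted_edge_cut V E S \<longleftrightarrow> S \<subseteq> E \<and> \<not> connected_graph V (E - S) \<and>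
     (\<forall>v\<in>V. card (component V (E - S) v) \<ge> 2)"

definition restricted_edge_connectivity :: "'a set \<Rightarrow> 'a set set \<Rightarrow> nat" where
  "restricted_edge_connectivity V E = Min {card S | S. restricted_edge_cut V E S}"

definition complete_V :: "nat \<Rightarrow> nat set" where
  "complete_V n = {0..<n}"

definition complete_E :: "nat \<Rightarrow> nat set set" where
  "complete_E n = {{i, j} | i j. i < n \<and> j < n \<and> i \<noteq> j}"

definition strong_V :: "'a set \<Rightarrow> 'b set \<Rightarrow> ('a \<times> 'b) set" where
  "strong_V V1 V2 = V1 \<times> V2"

definition strong_E :: "'a set \<Rightarrow> 'a set set \<Rightarrow> 'b set \<Rightarrow> 'b set set \<Rightarrow> ('a \<times> 'b) set set" where
  "strong_E V1 E1 V2 E2 = {{(x1, y1), (x2, y2)} | x1 y1 x2 y2.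
      x1 \<in> V1 \<and> x2 \<in> V1 \<and> y1 \<in> V2 \<and> y2 \<in> V2 \<and>
      ((x1 = x2 \<and> {y1, y2} \<in> E2) \<or> (y1 = y2 \<and> {x1, x2} \<in> E1) \<or>
       ({x1, x2} \<in> E1 \<and> {y1, y2} \<in> E2))}"

end

theory Submission
  imports Defs
begin


definition Fg :: "'a set \<Rightarrow> ('a \<Rightarrow> 'a set) \<Rightarrow> ('a \<Rightarrow> nat) \<Rightarrow> ('a \<Rightarrow> nat) \<Rightarrow> nat" where
  "Fg V N a b = (\<Sum>x\<in>V. a x * (b x + (\<Sum>z\<in>N x. b z)))"

locale nbr =
  fixes V :: "'a set" and N :: "'a \<Rightarrow> 'a set"
  assumes finV: "finite V" and NV: "\<And>x. N x \<subseteq> V" and irr: "\<And>x. x \<notin> N x"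
    and symN: "\<And>x z. z \<in> N x \<longleftrightarrow> x \<in> N z"
begin

lemma finN: "finite (N x)" using finV NV finite_subset by blast

lemma swap: "Fg V N a b = Fg V N b a"
proof -
  have eq: "{z. z \<in> V \<and> z \<in> N x} = N x" for x using NV by blast
  have eq2: "{x. x \<in> V \<and> z \<in> N x} = N z" for z using NV symN by blast
  have "(\<Sum>x\<in>V. \<Sum>z\<in>{z. z \<in> V \<and> z \<in> N x}. a x * b z) = (\<Sum>z\<in>V. \<Sum>x\<in>{x. x \<in> V \<and> z \<in> N x}. a x * b z)"
    by (rule sum.swap_restrict[OF finV finV])
  hence *: "(\<Sum>x\<in>V. \<Sum>z\<in>N x. a x * b z) = (\<Sum>z\<in>V. \<Sum>x\<in>N z. b z * a x)"
    unfolding eq eq2 by (simp add: mult.commute)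
  have "Fg V N a b = (\<Sum>x\<in>V. a x * b x) + (\<Sum>x\<in>V. \<Sum>z\<in>N x. a x * b z)"
    unfolding Fg_def by (simp add: distrib_left sum.distrib sum_distrib_left)
  moreover have "Fg V N b a = (\<Sum>x\<in>V. b x * a x) + (\<Sum>x\<in>V. \<Sum>z\<in>N x. b x * a z)"
    unfolding Fg_def by (simp add: distrib_left sum.distrib sum_distrib_left)
  ultimately show ?thesis using * by (simp add: mult.commute)
qed

lemma small:
  assumes ab: "\<And>x. x \<in> V \<Longrightarrow> a x + b x = n" and deg: "\<And>x. x \<in> V \<Longrightarrow> card (N x) \<ge> d"
  shows "Fg V N a b \<ge> (\<Sum>x\<in>V. a x) * (n + n * d - (\<Sum>x\<in>V. a x))"
proof -
  let ?s = "\<Sum>x\<in>V. a x"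
  have "b x + (\<Sum>z\<in>N x. b z) \<ge> n + n * d - ?s" if x: "x \<in> V" for x
  proof -
    have "(a x + b x) + (\<Sum>z\<in>N x. a z + b z) = n + n * card (N x)"
      using ab x NV by (simp add: subset_iff)
    hence e: "(b x + (\<Sum>z\<in>N x. b z)) + (a x + (\<Sum>z\<in>N x. a z)) = n + n * card (N x)"
      by (simp add: sum.distrib)
    have "a x + (\<Sum>z\<in>N x. a z) = (\<Sum>z\<in>insert x (N x). a z)"
      using irr finN by simp
    also have "\<dots> \<le> ?s" using NV x finV by (intro sum_mono2) auto
    finally have le: "a x + (\<Sum>z\<in>N x. a z) \<le> ?s" .
    have "n * d \<le> n * card (N x)" using deg x by simp
    thus ?thesis using e le by linarith
  qed
  hence "(\<Sum>x\<in>V. a x * (n + n * d - ?s)) \<le> Fg V N a b"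
    unfolding Fg_def by (intro sum_mono) (simp add: mult_le_mono2)
  thus ?thesis by (simp add: sum_distrib_right)
qed

lemma quad:
  fixes k c :: nat
  assumes "2 \<le> k" "k + 2 \<le> c"
  shows "2 * c - 4 \<le> k * (c - k)"
proof -
  obtain k' where k: "k = k' + 2" using assms(1) le_Suc_ex by (metis add.commute)
  obtain j where j: "c - k = j + 2" using assms(2) by (metis add.commute le_diff_iff' le_Suc_ex le_add2 add_le_imp_le_diff)
  have c: "c = k' + j + 4" using k j assms by linarith
  show ?thesis unfolding j c k by (simp add: algebra_simps)
qed


lemma decomp:
  fixes n :: nat and a :: "'a \<Rightarrow> nat"
  assumes x: "x \<in> V"
  shows "Fg V N a (\<lambda>z. n - a z) = a x * (n - a x) + a x * (\<Sum>z\<in>N x. n - a z) + (n - a x) * (\<Sum>z\<in>N x. a z) + (\<Sum>z\<in>V-{x}. a z * ((n - a z) + (\<Sum>u\<in>N z - {x}. n - a u)))"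
proof -
  have fin: "finite (V - {x})" using finV by simp
  have "Fg V N a (\<lambda>z. n - a z) = a x * ((n - a x) + (\<Sum>z\<in>N x. n - a z)) +
     (\<Sum>z\<in>V-{x}. a z * ((n - a z) + (\<Sum>u\<in>N z. n - a u)))"
    unfolding Fg_def using x finV by (simp add: sum.remove)
  also have "(\<Sum>z\<in>V-{x}. a z * ((n - a z) + (\<Sum>u\<in>N z. n - a u))) =
     (\<Sum>z\<in>V-{x}. a z * ((n - a z) + (\<Sum>u\<in>N z - {x}. n - a u)) + (if x \<in> N z then a z * (n - a x) else 0))"
  proof (rule sum.cong[OF refl])
    fix z assume "z \<in> V - {x}"
    show "a z * ((n - a z) + (\<Sum>u\<in>N z. n - a u)) = a z * ((n - a z) + (\<Sum>u\<in>N z - {x}. n - a u)) + (if x \<in> N z then a z * (n - a x) else 0)"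
    proof (cases "x \<in> N z")
      case True
      have "(\<Sum>u\<in>N z. n - a u) = (n - a x) + (\<Sum>u\<in>N z - {x}. n - a u)"
        using True finN by (simp add: sum.remove)
      thus ?thesis using True by (simp add: distrib_left)
    next
      case False
      hence "N z - {x} = N z" by blast
      thus ?thesis using False by simp
    qed
  qed
  also have "\<dots> = (\<Sum>z\<in>V-{x}. a z * ((n - a z) + (\<Sum>u\<in>N z - {x}. n - a u))) + (\<Sum>z\<in>V-{x}. if x \<in> N z then a z * (n - a x) else 0)"
    by (simp add: sum.distrib)
  also have "(\<Sum>z\<in>V-{x}. if x \<in> N z then a z * (n - a x) else 0) = (\<Sum>z\<in>{z\<in>V-{x}. x \<in> N z}. a z * (n - a x))"
    by (rule sum.inter_filter[OF fin, symmetric])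
  also have "{z\<in>V-{x}. x \<in> N z} = N x" using NV symN irr by blast
  also have "(\<Sum>z\<in>N x. a z * (n - a x)) = (n - a x) * (\<Sum>z\<in>N x. a z)"
    by (simp add: sum_distrib_left mult.commute)
  finally show ?thesis by (simp add: distrib_left add_ac)
qed

lemma concave:
  fixes n :: nat and a :: "'a \<Rightarrow> nat"
  assumes x: "x \<in> V" and an: "a x \<le> n"
  shows "Fg V N a (\<lambda>z. n - a z) \<ge> min (Fg V N (a(x:=0)) (\<lambda>z. n - (a(x:=0)) z)) (Fg V N (a(x:=n)) (\<lambda>z. n - (a(x:=n)) z))"
proof -
  define K where "K a \<equiv> (\<Sum>z\<in>V-{x}. a z * ((n - a z) + (\<Sum>u\<in>N z - {x}. n - a u)))" for a
  have Keq: "K (a(x:=s)) = K a" for s unfolding K_def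
  proof (intro sum.cong refl)
    fix z assume z: "z \<in> V - {x}"
    have "(\<Sum>u\<in>N z - {x}. n - (a(x:=s)) u) = (\<Sum>u\<in>N z - {x}. n - a u)"
      by (intro sum.cong refl) simp
    thus "(a(x:=s)) z * ((n - (a(x:=s)) z) + (\<Sum>u\<in>N z - {x}. n - (a(x:=s)) u)) = a z * ((n - a z) + (\<Sum>u\<in>N z - {x}. n - a u))"
      using z by simp
  qed
  have Neq: "(\<Sum>z\<in>N x. f ((a(x:=s)) z)) = (\<Sum>z\<in>N x. f (a z))" for s and f :: "nat \<Rightarrow> nat"
    using irr by (intro sum.cong refl) (metis fun_upd_other)
  let ?Sb = "\<Sum>z\<in>N x. n - a z" and ?Sa = "\<Sum>z\<in>N x. a z"
  have F: "Fg V N a (\<lambda>z. n - a z) = a x * (n - a x) + a x * ?Sb + (n - a x) * ?Sa + K a"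
    using decomp[OF x, where n=n and a=a] K_def by simp
  have F0: "Fg V N (a(x:=0)) (\<lambda>z. n - (a(x:=0)) z) = n * ?Sa + K a"
    using decomp[OF x, where n=n and a="a(x:=0)"] K_def Keq[of 0] Neq[where s=0 and f="\<lambda>t. t"] by simp
  have Fn: "Fg V N (a(x:=n)) (\<lambda>z. n - (a(x:=n)) z) = n * ?Sb + K a"
    using decomp[OF x, where n=n and a="a(x:=n)"] K_def Keq[of n] Neq[where s=n and f="\<lambda>t. n - t"] by simp
  show ?thesis
  proof (cases "?Sb \<le> ?Sa")
    case True
    have "n * ?Sb = (a x + (n - a x)) * ?Sb" using an by simp
    also have "\<dots> = a x * ?Sb + (n - a x) * ?Sb" by (rule add_mult_distrib)
    also have "\<dots> \<le> a x * ?Sb + (n - a x) * ?Sa" using True by (simp add: mult_le_mono2)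
    finally have "n * ?Sb + K a \<le> a x * (n - a x) + a x * ?Sb + (n - a x) * ?Sa + K a" by linarith
    hence "Fg V N (a(x:=n)) (\<lambda>z. n - (a(x:=n)) z) \<le> Fg V N a (\<lambda>z. n - a z)" unfolding F Fn .
    thus ?thesis by (rule min.coboundedI2)
  next
    case False
    have "n * ?Sa = (a x + (n - a x)) * ?Sa" using an by simp
    also have "\<dots> = a x * ?Sa + (n - a x) * ?Sa" by (rule add_mult_distrib)
    also have "\<dots> \<le> a x * ?Sb + (n - a x) * ?Sa" using False by (simp add: mult_le_mono2)
    finally have "n * ?Sa + K a \<le> a x * (n - a x) + a x * ?Sb + (n - a x) * ?Sa + K a" by linarith
    hence "Fg V N (a(x:=0)) (\<lambda>z. n - (a(x:=0)) z) \<le> Fg V N a (\<lambda>z. n - a z)" unfolding F F0 .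
    thus ?thesis by (rule min.coboundedI1)
  qed
qed

lemma nomix:
  assumes "\<And>x. x \<in> V \<Longrightarrow> a x = 0 \<or> a x = n"
  shows "Fg V N a (\<lambda>z. n - a z) = n * n * card (Sigma {x\<in>V. a x = n} (\<lambda>x. N x - {x\<in>V. a x = n}))"
proof -
  let ?P = "{x\<in>V. a x = n}"
  have "Fg V N a (\<lambda>z. n - a z) = (\<Sum>x\<in>V. if x \<in> ?P then n * (n * card (N x - ?P)) else 0)"
    unfolding Fg_def
  proof (rule sum.cong[OF refl])
    fix x assume x: "x \<in> V"
    show "a x * (n - a x + (\<Sum>z\<in>N x. n - a z)) = (if x \<in> ?P then n * (n * card (N x - ?P)) else 0)"
    proof (cases "a x = n")
      case True
      have "(\<Sum>z\<in>N x. n - a z) = (\<Sum>z\<in>N x. if z \<notin> ?P then n else 0)"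
      proof (intro sum.cong refl)
        fix z assume z: "z \<in> N x"
        hence "z \<in> V" using NV by blast
        thus "n - a z = (if z \<notin> ?P then n else 0)" using assms[of z] z by auto
      qed
      also have "\<dots> = (\<Sum>z\<in>{z\<in>N x. z \<notin> ?P}. n)" by (rule sum.inter_filter[OF finN, symmetric])
      also have "{z\<in>N x. z \<notin> ?P} = N x - ?P" by blast
      also have "(\<Sum>z\<in>N x - ?P. n) = n * card (N x - ?P)" by simp
      finally show ?thesis using True x by simp
    next
      case False thus ?thesis using assms[of x] x by simp
    qed
  qed
  also have "\<dots> = (\<Sum>x\<in>V. if a x = n then n * (n * card (N x - ?P)) else 0)"
    by (rule sum.cong) auto
  also have "\<dots> = (\<Sum>x\<in>?P. n * (n * card (N x - ?P)))"
    by (rule sum.inter_filter[OF finV, symmetric])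
  also have "\<dots> = n * n * (\<Sum>x\<in>?P. card (N x - ?P))" by (simp add: sum_distrib_left mult.assoc)
  also have "(\<Sum>x\<in>?P. card (N x - ?P)) = card (Sigma ?P (\<lambda>x. N x - ?P))"
    using finV finN by (simp add: card_SigmaI)
  finally show ?thesis .
qed


lemma core:
  fixes n d lam :: nat and a :: "'a \<Rightarrow> nat"
  assumes n4: "n \<ge> 4" and d1: "d \<ge> 1" and deg: "\<And>x. x \<in> V \<Longrightarrow> card (N x) \<ge> d"
    and lamP: "\<And>P. P \<subseteq> V \<Longrightarrow> P \<noteq> {} \<Longrightarrow> V - P \<noteq> {} \<Longrightarrow> lam \<le> card (Sigma P (\<lambda>x. N x - P))"
    and aV: "\<forall>x\<in>V. a x \<le> n" and sA: "2 \<le> (\<Sum>x\<in>V. a x)" and sB: "2 \<le> (\<Sum>x\<in>V. n - a x)"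
  shows "min (n * n * lam) (2 * (n + n * d) - 4) \<le> Fg V N a (\<lambda>z. n - a z)"
  using aV sA sB
proof (induction "card {x\<in>V. 0 < a x \<and> a x < n}" arbitrary: a rule: less_induct)
  case (less a)
  let ?c = "n + n * d"
  let ?sA = "\<Sum>x\<in>V. a x" and ?sB = "\<Sum>x\<in>V. n - a x"
  have ab: "\<And>x. x \<in> V \<Longrightarrow> a x + (n - a x) = n" using less.prems(1) by simp
  have ba: "\<And>x. x \<in> V \<Longrightarrow> (n - a x) + a x = n" using less.prems(1) by simp
  show ?case
  proof (cases "?sA + 2 \<le> ?c")
    case True
    have "2 * ?c - 4 \<le> ?sA * (?c - ?sA)" by (rule quad[OF less.prems(2) True])
    also have "\<dots> \<le> Fg V N a (\<lambda>z. n - a z)" using small[of a "\<lambda>z. n - a z" n d, OF ab deg] by simp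
    finally show ?thesis by simp
  next
    case nA: False
    show ?thesis
    proof (cases "?sB + 2 \<le> ?c")
      case True
      have "2 * ?c - 4 \<le> ?sB * (?c - ?sB)" by (rule quad[OF less.prems(3) True])
      also have "\<dots> \<le> Fg V N (\<lambda>z. n - a z) a" using small[of "\<lambda>z. n - a z" a n d, OF ba deg] by simp
      also have "\<dots> = Fg V N a (\<lambda>z. n - a z)" by (rule swap)
      finally show ?thesis by simp
    next
      case nB: False
      show ?thesis
      proof (cases "\<exists>x\<in>V. 0 < a x \<and> a x < n")
        case False
        hence nm: "\<And>x. x \<in> V \<Longrightarrow> a x = 0 \<or> a x = n" using less.prems(1) by force
        let ?P = "{x\<in>V. a x = n}"
        have P1: "?P \<noteq> {}"
        proof
          assume "?P = {}"
          hence "\<And>x. x \<in> V \<Longrightarrow> a x = 0" using nm by blast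
          hence "?sA = 0" by simp
          thus False using less.prems(2) by simp
        qed
        have P2: "V - ?P \<noteq> {}"
        proof
          assume "V - ?P = {}"
          hence "\<And>x. x \<in> V \<Longrightarrow> a x = n" by blast
          hence "?sB = 0" by simp
          thus False using less.prems(3) by simp
        qed
        have "n * n * lam \<le> n * n * card (Sigma ?P (\<lambda>x. N x - ?P))"
          using lamP[OF _ P1 P2] by simp
        also have "\<dots> = Fg V N a (\<lambda>z. n - a z)" using nomix[OF nm] by simp
        finally show ?thesis by simp
      next
        case True
        then obtain x where x: "x \<in> V" "0 < a x" "a x < n" by blast
        define a0 where "a0 = a(x:=0)"
        define an where "an = a(x:=n)"
        let ?R = "\<Sum>z\<in>V-{x}. a z" and ?R' = "\<Sum>z\<in>V-{x}. n - a z"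
        have eA: "?sA = a x + ?R" using x finV by (simp add: sum.remove)
        have eB: "?sB = (n - a x) + ?R'" using x finV by (simp add: sum.remove)
        have r0: "(\<Sum>z\<in>V-{x}. f (a0 z)) = (\<Sum>z\<in>V-{x}. f (a z))" for f :: "nat \<Rightarrow> nat"
          unfolding a0_def by (intro sum.cong) auto
        have rn: "(\<Sum>z\<in>V-{x}. f (an z)) = (\<Sum>z\<in>V-{x}. f (a z))" for f :: "nat \<Rightarrow> nat"
          unfolding an_def by (intro sum.cong) auto
        have s0A: "(\<Sum>z\<in>V. a0 z) = ?R" using x finV r0[of "\<lambda>t. t"] by (simp add: sum.remove a0_def)
        have s0B: "(\<Sum>z\<in>V. n - a0 z) = n + ?R'" using x finV r0[of "\<lambda>t. n - t"] by (simp add: sum.remove a0_def)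
        have snA: "(\<Sum>z\<in>V. an z) = n + ?R" using x finV rn[of "\<lambda>t. t"] by (simp add: sum.remove an_def)
        have snB: "(\<Sum>z\<in>V. n - an z) = ?R'" using x finV rn[of "\<lambda>t. n - t"] by (simp add: sum.remove an_def)
        have "n \<le> n * d" using d1 by simp
        hence R: "2 \<le> ?R" "2 \<le> ?R'" using nA nB eA eB x n4 by linarith+
        have mix: "\<And>b. b x = 0 \<or> b x = n \<Longrightarrow> (\<forall>z. z \<noteq> x \<longrightarrow> b z = a z) \<Longrightarrow>
           card {z\<in>V. 0 < b z \<and> b z < n} < card {z\<in>V. 0 < a z \<and> a z < n}"
        proof -
          fix b :: "'a \<Rightarrow> nat" assume h: "b x = 0 \<or> b x = n" "\<forall>z. z \<noteq> x \<longrightarrow> b z = a z"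
          have eqS: "{z\<in>V. 0 < b z \<and> b z < n} = {z\<in>V. 0 < a z \<and> a z < n} - {x}"
          proof (rule set_eqI)
            fix z show "z \<in> {z\<in>V. 0 < b z \<and> b z < n} \<longleftrightarrow> z \<in> {z\<in>V. 0 < a z \<and> a z < n} - {x}"
              using h by (cases "z = x") auto
          qed
          have mem: "x \<in> {z\<in>V. 0 < a z \<and> a z < n}" using x by simp
          have fin: "finite {z\<in>V. 0 < a z \<and> a z < n}" using finV by simp
          show "card {z\<in>V. 0 < b z \<and> b z < n} < card {z\<in>V. 0 < a z \<and> a z < n}"
            unfolding eqS by (rule card_Diff1_less[OF fin mem])
        qed
        have I0: "min (n * n * lam) (2 * ?c - 4) \<le> Fg V N a0 (\<lambda>z. n - a0 z)"
          apply (rule less.hyps)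
          using mix[of a0] less.prems(1) s0A s0B R unfolding a0_def by auto
        have In: "min (n * n * lam) (2 * ?c - 4) \<le> Fg V N an (\<lambda>z. n - an z)"
          apply (rule less.hyps)
          using mix[of an] less.prems(1) snA snB R unfolding an_def by auto
        have "min (Fg V N a0 (\<lambda>z. n - a0 z)) (Fg V N an (\<lambda>z. n - an z)) \<le> Fg V N a (\<lambda>z. n - a z)"
          unfolding a0_def an_def using concave[OF x(1)] x by simp
        thus ?thesis using I0 In by linarith
      qed
    qed
  qed
qed

end



definition NG :: "'a set set \<Rightarrow> 'a \<Rightarrow> 'a set" where "NG E x = {u. adj E x u}"

lemma NG_nbr: assumes "simple_graph V E" shows "nbr V (NG E)"
  using assms by unfold_locales (auto simp: NG_def adj_def simple_graph_def insert_commute)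

lemma edge_iff: assumes "simple_graph V E" shows "({x,z} \<in> E) = (z \<in> NG E x)"
proof
  assume h: "{x,z} \<in> E"
  hence "card {x,z} = 2" using assms by (simp add: simple_graph_def)
  hence "x \<noteq> z" by (cases "x = z") auto
  thus "z \<in> NG E x" using h by (simp add: NG_def adj_def)
qed (simp add: NG_def adj_def)

lemma NG_V: "simple_graph V E \<Longrightarrow> z \<in> NG E x \<Longrightarrow> x \<in> V \<and> z \<in> V"
  by (auto simp: NG_def adj_def simple_graph_def)

lemma cE_iff: "{y1,y2} \<in> complete_E n \<longleftrightarrow> y1 < n \<and> y2 < n \<and> y1 \<noteq> y2"
  unfolding complete_E_def by (auto simp: doubleton_eq_iff)

lemma sE_iff: assumes sg: "simple_graph V E"
  shows "{p,q} \<in> strong_E V E {0..<n} (complete_E n) \<longleftrightarrow>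
    p \<in> V \<times> {0..<n} \<and> q \<in> V \<times> {0..<n} \<and> p \<noteq> q \<and> (fst p = fst q \<or> fst q \<in> NG E (fst p))"
proof -
  obtain x1 y1 where p: "p = (x1,y1)" by (cases p)
  obtain x2 y2 where q: "q = (x2,y2)" by (cases q)
  have sym: "z \<in> NG E x \<longleftrightarrow> x \<in> NG E z" for x z
    using nbr.symN[OF NG_nbr[OF sg]] by blast
  have C: "(a1 \<in> V \<and> a2 \<in> V \<and> b1 \<in> {0..<n} \<and> b2 \<in> {0..<n} \<and>
      ((a1 = a2 \<and> {b1, b2} \<in> complete_E n) \<or> (b1 = b2 \<and> {a1, a2} \<in> E) \<or>
       ({a1, a2} \<in> E \<and> {b1, b2} \<in> complete_E n)))
     \<longleftrightarrow> (a1,b1) \<in> V \<times> {0..<n} \<and> (a2,b2) \<in> V \<times> {0..<n} \<and> (a1,b1) \<noteq> (a2,b2) \<and> (a1 = a2 \<or> a2 \<in> NG E a1)"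
    for a1 a2 b1 b2
    unfolding edge_iff[OF sg] cE_iff using nbr.irr[OF NG_nbr[OF sg]] by auto
  show ?thesis
  proof
    assume "{p,q} \<in> strong_E V E {0..<n} (complete_E n)"
    then obtain a1 b1 a2 b2 where e: "{p,q} = {(a1,b1),(a2,b2)}" and
      c: "a1 \<in> V \<and> a2 \<in> V \<and> b1 \<in> {0..<n} \<and> b2 \<in> {0..<n} \<and>
      ((a1 = a2 \<and> {b1, b2} \<in> complete_E n) \<or> (b1 = b2 \<and> {a1, a2} \<in> E) \<or>
       ({a1, a2} \<in> E \<and> {b1, b2} \<in> complete_E n))"
      unfolding strong_E_def by blast
    have c': "(a1,b1) \<in> V \<times> {0..<n} \<and> (a2,b2) \<in> V \<times> {0..<n} \<and> (a1,b1) \<noteq> (a2,b2) \<and> (a1 = a2 \<or> a2 \<in> NG E a1)"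
      using c C by blast
    from e have "(p = (a1,b1) \<and> q = (a2,b2)) \<or> (p = (a2,b2) \<and> q = (a1,b1))"
      by (simp add: doubleton_eq_iff)
    thus "p \<in> V \<times> {0..<n} \<and> q \<in> V \<times> {0..<n} \<and> p \<noteq> q \<and> (fst p = fst q \<or> fst q \<in> NG E (fst p))"
      using c' sym by auto
  next
    assume h: "p \<in> V \<times> {0..<n} \<and> q \<in> V \<times> {0..<n} \<and> p \<noteq> q \<and> (fst p = fst q \<or> fst q \<in> NG E (fst p))"
    have "x1 \<in> V \<and> x2 \<in> V \<and> y1 \<in> {0..<n} \<and> y2 \<in> {0..<n} \<and>
      ((x1 = x2 \<and> {y1, y2} \<in> complete_E n) \<or> (y1 = y2 \<and> {x1, x2} \<in> E) \<or>
       ({x1, x2} \<in> E \<and> {y1, y2} \<in> complete_E n))"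
      using C[of x1 x2 y1 y2] h unfolding p q by simp
    thus "{p,q} \<in> strong_E V E {0..<n} (complete_E n)"
      unfolding strong_E_def p q by blast
  qed
qed

lemma sE_elem: "e \<in> strong_E V E W F \<Longrightarrow> \<exists>p q. e = {p,q}"
  unfolding strong_E_def by blast

lemma reach_sym: "reachable W F x y \<Longrightarrow> reachable W F y x"
  unfolding reachable_def
proof (induction rule: rtranclp_induct)
  case (step y z)
  have "adj F z y" using step(2) by (auto simp: adj_def insert_commute)
  hence "(\<lambda>x y. x \<in> W \<and> y \<in> W \<and> adj F x y) z y" using step(2) by simp
  thus ?case using step(3) by (rule converse_rtranclp_into_rtranclp)
qed simp

lemma reach_stay:
  assumes "reachable W F x y" "x \<in> A" "\<And>u v. u \<in> A \<Longrightarrow> v \<in> W \<Longrightarrow> adj F u v \<Longrightarrow> v \<in> A"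
  shows "y \<in> A"
  using assms(1) unfolding reachable_def
  by (induction rule: rtranclp_induct) (use assms in auto)

definition cut_of :: "'b set set \<Rightarrow> 'b set \<Rightarrow> 'b set set" where
  "cut_of F A = {e\<in>F. \<exists>u v. e = {u,v} \<and> u \<in> A \<and> v \<notin> A}"

lemma cut_restricted:
  assumes finW: "finite W" and AW: "A \<subseteq> W" and u0: "u0 \<in> A" and w0: "w0 \<in> W" "w0 \<notin> A"
    and nb: "\<And>v. v \<in> W \<Longrightarrow> \<exists>w\<in>W. w \<noteq> v \<and> {v,w} \<in> F \<and> (v \<in> A \<longleftrightarrow> w \<in> A)"
  shows "restricted_edge_cut W F (cut_of F A)"
  unfolding restricted_edge_cut_def
proof (intro conjI ballI)
  show "cut_of F A \<subseteq> F" by (auto simp: cut_of_def)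
  show "\<not> connected_graph W (F - cut_of F A)"
  proof
    assume "connected_graph W (F - cut_of F A)"
    hence r: "reachable W (F - cut_of F A) u0 w0" using u0 AW w0 by (auto simp: connected_graph_def)
    have "w0 \<in> A"
    proof (rule reach_stay[OF r u0])
      fix u v assume "u \<in> A" "v \<in> W" "adj (F - cut_of F A) u v"
      thus "v \<in> A" by (auto simp: adj_def cut_of_def)
    qed
    thus False using w0 by simp
  qed
  fix v assume v: "v \<in> W"
  obtain w where w: "w \<in> W" "w \<noteq> v" "{v,w} \<in> F" "v \<in> A \<longleftrightarrow> w \<in> A" using nb[OF v] by blast
  have "{v,w} \<notin> cut_of F A"
  proof
    assume "{v,w} \<in> cut_of F A"
    then obtain u u' where "{v,w} = {u,u'}" "u \<in> A" "u' \<notin> A" by (auto simp: cut_of_def)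
    thus False using w(4) by (auto simp: doubleton_eq_iff)
  qed
  hence "adj (F - cut_of F A) v w" using w by (auto simp: adj_def)
  hence "reachable W (F - cut_of F A) v w" using v w unfolding reachable_def by auto
  moreover have "reachable W (F - cut_of F A) v v" unfolding reachable_def by simp
  ultimately have "{v,w} \<subseteq> component W (F - cut_of F A) v" using v w by (auto simp: component_def)
  moreover have "finite (component W (F - cut_of F A) v)" using finW by (auto simp: component_def)
  ultimately have "card {v,w} \<le> card (component W (F - cut_of F A) v)" by (rule card_mono[rotated])
  thus "2 \<le> card (component W (F - cut_of F A) v)" using w by simp
qed

lemma restricted_cut_side:
  assumes finW: "finite W" and FW: "\<And>e. e \<in> F \<Longrightarrow> e \<subseteq> W" and S: "restricted_edge_cut W F S" and ne: "W \<noteq> {}"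
  shows "\<exists>A \<subseteq> W. 2 \<le> card A \<and> 2 \<le> card (W - A) \<and> cut_of F A \<subseteq> S"
proof -
  from S have S1: "S \<subseteq> F" and S2: "\<not> connected_graph W (F - S)"
    and S3: "\<And>v. v \<in> W \<Longrightarrow> 2 \<le> card (component W (F - S) v)"
    by (auto simp: restricted_edge_cut_def)
  from S2 ne obtain x y where xy: "x \<in> W" "y \<in> W" "\<not> reachable W (F - S) x y"
    by (auto simp: connected_graph_def)
  define A where "A = component W (F - S) x"
  have AW: "A \<subseteq> W" by (auto simp: A_def component_def)
  have "component W (F - S) y \<subseteq> W - A"
  proof
    fix u assume u: "u \<in> component W (F - S) y"
    hence "u \<in> W" "reachable W (F - S) y u" by (auto simp: component_def)
    moreover have "u \<notin> A"
    proof
      assume "u \<in> A"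
      hence "reachable W (F - S) x u" by (simp add: A_def component_def)
      moreover have "reachable W (F - S) u y" using reach_sym u by (auto simp: component_def)
      ultimately have "reachable W (F - S) x y" unfolding reachable_def by (rule rtranclp_trans)
      thus False using xy by simp
    qed
    ultimately show "u \<in> W - A" by simp
  qed
  hence "card (component W (F - S) y) \<le> card (W - A)" using finW by (intro card_mono) auto
  hence c2: "2 \<le> card (W - A)" using S3[OF xy(2)] by simp
  have c1: "2 \<le> card A" using S3[OF xy(1)] by (simp add: A_def)
  have "cut_of F A \<subseteq> S"
  proof
    fix e assume "e \<in> cut_of F A"
    then obtain u v where e: "e \<in> F" "e = {u,v}" "u \<in> A" "v \<notin> A" by (auto simp: cut_of_def)
    show "e \<in> S"
    proof (rule ccontr)
      assume "e \<notin> S"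
      have "u \<in> W" "v \<in> W" using FW[OF e(1)] e(2) by auto
      have "adj (F - S) u v" using e \<open>e \<notin> S\<close> by (auto simp: adj_def)
      moreover have "reachable W (F - S) x u" using e(3) by (simp add: A_def component_def)
      ultimately have "reachable W (F - S) x v" using \<open>u \<in> W\<close> \<open>v \<in> W\<close> unfolding reachable_def
        by (simp add: rtranclp.rtrancl_into_rtrancl)
      hence "v \<in> A" using \<open>v \<in> W\<close> by (simp add: A_def component_def)
      thus False using e by simp
    qed
  qed
  thus ?thesis using AW c1 c2 by blast
qed




definition aA :: "('a \<times> nat) set \<Rightarrow> nat \<Rightarrow> 'a \<Rightarrow> nat" where
  "aA A n x = card {y\<in>{0..<n}. (x,y) \<in> A}"

lemma aA_le: "aA A n x \<le> n"
proof -
  have "card {y\<in>{0..<n}. (x,y) \<in> A} \<le> card {0..<n}" by (intro card_mono) auto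
  thus ?thesis by (simp add: aA_def)
qed

lemma compl_card: "card {y\<in>{0..<n}. (x,y) \<notin> A} = n - aA A n x"
proof -
  have "{y\<in>{0..<n}. (x,y) \<notin> A} = {0..<n} - {y\<in>{0..<n}. (x,y) \<in> A}" by auto
  moreover have "card ({0..<n} - {y\<in>{0..<n}. (x,y) \<in> A}) = card {0..<n} - card {y\<in>{0..<n}. (x,y) \<in> A}"
    by (rule card_Diff_subset) auto
  ultimately have "card {y\<in>{0..<n}. (x,y) \<notin> A} = card {0..<n} - card {y\<in>{0..<n}. (x,y) \<in> A}"
    by simp
  thus ?thesis by (simp add: aA_def)
qed

lemma compl_card': "card {y. y < n \<and> (x,y) \<notin> A} = n - aA A n x"
  using compl_card[of n x A] by simp

lemma cardA: assumes "finite V" "A \<subseteq> V \<times> {0..<n}" shows "card A = (\<Sum>x\<in>V. aA A n x)"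
proof -
  have "A = Sigma V (\<lambda>x. {y\<in>{0..<n}. (x,y) \<in> A})" using assms(2) by auto
  hence "card A = card (Sigma V (\<lambda>x. {y\<in>{0..<n}. (x,y) \<in> A}))" by simp
  also have "\<dots> = (\<Sum>x\<in>V. aA A n x)" using assms(1) by (simp add: aA_def)
  finally show ?thesis .
qed

lemma cardB: assumes "finite V" shows "card (V \<times> {0..<n} - A) = (\<Sum>x\<in>V. n - aA A n x)"
proof -
  have "V \<times> {0..<n} - A = Sigma V (\<lambda>x. {y\<in>{0..<n}. (x,y) \<notin> A})" by auto
  hence "card (V \<times> {0..<n} - A) = card (Sigma V (\<lambda>x. {y\<in>{0..<n}. (x,y) \<notin> A}))" by simp
  also have "\<dots> = (\<Sum>x\<in>V. card {y\<in>{0..<n}. (x,y) \<notin> A})" by (rule card_SigmaI[OF assms]) simp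
  also have "\<dots> = (\<Sum>x\<in>V. n - aA A n x)" by (simp only: compl_card)
  finally show ?thesis .
qed

lemma cut_card:
  assumes sg: "simple_graph V E" and AV: "A \<subseteq> V \<times> {0..<n}"
  shows "card (cut_of (strong_E V E {0..<n} (complete_E n)) A) = Fg V (NG E) (aA A n) (\<lambda>x. n - aA A n x)"
proof -
  interpret nb: nbr V "NG E" by (rule NG_nbr[OF sg])
  let ?EH = "strong_E V E {0..<n} (complete_E n)"
  let ?VH = "V \<times> {0..<n}"
  define Ord where "Ord = Sigma A (\<lambda>u. {v \<in> ?VH. v \<notin> A \<and> {u,v} \<in> ?EH})"
  have finVH: "finite ?VH" using nb.finV by simp
  have finA: "finite A" using AV finVH finite_subset by blast
  have cut_eq: "cut_of ?EH A = (\<lambda>(u,v). {u,v}) ` Ord"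
  proof
    show "cut_of ?EH A \<subseteq> (\<lambda>(u,v). {u,v}) ` Ord"
    proof
      fix e assume "e \<in> cut_of ?EH A"
      then obtain u v where e: "e \<in> ?EH" "e = {u,v}" "u \<in> A" "v \<notin> A" by (auto simp: cut_of_def)
      have "v \<in> ?VH" using e sE_iff[OF sg, of u v n] by simp
      hence "(u,v) \<in> Ord" using e by (simp add: Ord_def)
      thus "e \<in> (\<lambda>(u,v). {u,v}) ` Ord" using e(2) by force
    qed
    show "(\<lambda>(u,v). {u,v}) ` Ord \<subseteq> cut_of ?EH A"
      by (auto simp: Ord_def cut_of_def)
  qed
  have inj: "inj_on (\<lambda>(u,v). {u,v}) Ord"
    by (auto simp: inj_on_def Ord_def doubleton_eq_iff)
  have fin_in: "\<forall>u\<in>A. finite {v \<in> ?VH. v \<notin> A \<and> {u,v} \<in> ?EH}" using finVH by simp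
  have "card (cut_of ?EH A) = card Ord" unfolding cut_eq using inj by (rule card_image)
  also have "\<dots> = (\<Sum>u\<in>A. card {v \<in> ?VH. v \<notin> A \<and> {u,v} \<in> ?EH})"
    unfolding Ord_def using finA fin_in by (rule card_SigmaI)
  also have "\<dots> = (\<Sum>u\<in>A. (n - aA A n (fst u)) + (\<Sum>z\<in>NG E (fst u). n - aA A n z))"
  proof (rule sum.cong[OF refl])
    fix u assume u: "u \<in> A"
    obtain x y where uxy: "u = (x,y)" by (cases u)
    have xV: "x \<in> V" "y < n" using u AV uxy by auto
    have seq: "{v \<in> ?VH. v \<notin> A \<and> {u,v} \<in> ?EH} = Sigma (insert x (NG E x)) (\<lambda>z. {y'\<in>{0..<n}. (z,y') \<notin> A})"
    proof (rule set_eqI)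
      fix v :: "'a \<times> nat"
      obtain z y' where vz: "v = (z,y')" by (cases v)
      show "v \<in> {v \<in> ?VH. v \<notin> A \<and> {u,v} \<in> ?EH} \<longleftrightarrow> v \<in> Sigma (insert x (NG E x)) (\<lambda>z. {y'\<in>{0..<n}. (z,y') \<notin> A})"
        unfolding vz uxy using sE_iff[OF sg, of "(x,y)" "(z,y')" n] xV u uxy NG_V[OF sg, of z x] by auto
    qed
    have "card {v \<in> ?VH. v \<notin> A \<and> {u,v} \<in> ?EH} = (\<Sum>z\<in>insert x (NG E x). card {y'\<in>{0..<n}. (z,y') \<notin> A})"
      unfolding seq using nb.finN by (subst card_SigmaI) auto
    also have "\<dots> = (n - aA A n x) + (\<Sum>z\<in>NG E x. n - aA A n z)"
      using nb.finN nb.irr by (simp add: compl_card')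
    finally show "card {v \<in> ?VH. v \<notin> A \<and> {u,v} \<in> ?EH} = (n - aA A n (fst u)) + (\<Sum>z\<in>NG E (fst u). n - aA A n z)"
      using uxy by simp
  qed
  also have "\<dots> = (\<Sum>x\<in>V. aA A n x * ((n - aA A n x) + (\<Sum>z\<in>NG E x. n - aA A n z)))"
  proof -
    let ?g = "\<lambda>x. (n - aA A n x) + (\<Sum>z\<in>NG E x. n - aA A n z)"
    have Aeq: "A = Sigma V (\<lambda>x. {y\<in>{0..<n}. (x,y) \<in> A})" using AV by auto
    have "(\<Sum>u\<in>A. ?g (fst u)) = (\<Sum>u\<in>Sigma V (\<lambda>x. {y\<in>{0..<n}. (x,y) \<in> A}). ?g (fst u))"
      using Aeq by simp
    also have "\<dots> = (\<Sum>(x,y)\<in>Sigma V (\<lambda>x. {y\<in>{0..<n}. (x,y) \<in> A}). ?g x)"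
      by (rule sum.cong) auto
    also have "\<dots> = (\<Sum>x\<in>V. \<Sum>y\<in>{y\<in>{0..<n}. (x,y) \<in> A}. ?g x)"
      by (rule sum.Sigma[symmetric]) (use nb.finV in auto)
    also have "\<dots> = (\<Sum>x\<in>V. aA A n x * ?g x)" by (simp add: aA_def)
    finally show ?thesis .
  qed
  finally show ?thesis by (simp add: Fg_def)
qed




lemma finE: "simple_graph V E \<Longrightarrow> finite E"
proof -
  assume sg: "simple_graph V E"
  hence "E \<subseteq> Pow V" "finite V" by (auto simp: simple_graph_def)
  thus "finite E" by (meson finite_Pow_iff finite_subset)
qed

lemma sum_deg_le: assumes sg: "simple_graph V E" shows "(\<Sum>x\<in>V. card (NG E x)) \<le> 2 * card E"
proof -
  interpret nb: nbr V "NG E" by (rule NG_nbr[OF sg])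
  have fE: "finite E" by (rule finE[OF sg])
  have "(\<Sum>x\<in>V. card (NG E x)) = card (Sigma V (NG E))"
    using nb.finV nb.finN by (simp add: card_SigmaI)
  also have "\<dots> \<le> card (\<Union>e\<in>E. {p \<in> e \<times> e. fst p \<noteq> snd p})"
  proof (rule card_mono)
    show "finite (\<Union>e\<in>E. {p \<in> e \<times> e. fst p \<noteq> snd p})"
      using fE sg by (auto simp: simple_graph_def intro: finite_subset[OF _ finite_cartesian_product] card_ge_0_finite)
    show "Sigma V (NG E) \<subseteq> (\<Union>e\<in>E. {p \<in> e \<times> e. fst p \<noteq> snd p})"
      by (auto simp: NG_def adj_def)
  qed
  also have "\<dots> \<le> (\<Sum>e\<in>E. card {p \<in> e \<times> e. fst p \<noteq> snd p})" by (rule card_UN_le[OF fE])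
  also have "\<dots> = (\<Sum>e\<in>E. 2)"
  proof (rule sum.cong[OF refl])
    fix e assume "e \<in> E"
    hence "card e = 2" using sg by (simp add: simple_graph_def)
    then obtain a b where ab: "e = {a,b}" "a \<noteq> b" by (auto simp: card_2_iff)
    have "{p \<in> e \<times> e. fst p \<noteq> snd p} = {(a,b),(b,a)}" using ab by auto
    thus "card {p \<in> e \<times> e. fst p \<noteq> snd p} = 2" using ab by simp
  qed
  finally show ?thesis by simp
qed


lemma other_vertex: assumes "2 \<le> card V" shows "\<exists>y\<in>V. y \<noteq> x"
proof (rule ccontr)
  assume "\<not> (\<exists>y\<in>V. y \<noteq> x)"
  hence "V \<subseteq> {x}" by blast
  hence "card V \<le> card {x}" by (intro card_mono) auto
  thus False using assms by simp
qed

theorem theorem3p7: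
  fixes V :: "'a set" and E :: "'a set set" and n :: nat
  assumes "simple_graph V E"
    and "connected_graph V E"
    and "card V \<ge> 2"
    and "n \<ge> 4"
  shows "restricted_edge_connectivity (strong_V V (complete_V n)) (strong_E V E (complete_V n) (complete_E n))
         = min (n\<^sup>2 * edge_connectivity V E)
               (min ((n - 1) * (card V + 2 * card E)) (2 * n * min_degree V E + 2 * n - 4))"
proof -
  have sg: "simple_graph V E" and cg: "connected_graph V E" and m2: "card V \<ge> 2" and n4: "n \<ge> 4"
    using assms by auto
  interpret nb: nbr V "NG E" by (rule NG_nbr[OF sg])
  let ?VH = "V \<times> {0..<n}" and ?EH = "strong_E V E {0..<n} (complete_E n)"
  have VH: "strong_V V (complete_V n) = ?VH" by (simp add: strong_V_def complete_V_def)
  have EHd: "strong_E V E (complete_V n) (complete_E n) = ?EH" by (simp add: complete_V_def)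
  have V0: "V \<noteq> {}" using m2 by auto
  have finVH: "finite ?VH" using nb.finV by simp
  have FW: "\<And>e. e \<in> ?EH \<Longrightarrow> e \<subseteq> ?VH"
  proof -
    fix e assume e: "e \<in> ?EH"
    then obtain p q where "e = {p,q}" using sE_elem by blast
    thus "e \<subseteq> ?VH" using e sE_iff[OF sg, of p q n] by auto
  qed
  have finEH: "finite ?EH" using FW finVH by (meson Pow_iff finite_Pow_iff finite_subset subsetI)
  have VH0: "?VH \<noteq> {}" using V0 n4 by auto
  define d where "d = min_degree V E"
  have degeq: "degree E ` V = (\<lambda>x. card (NG E x)) ` V" by (simp add: degree_def NG_def)
  have d_le: "\<And>x. x \<in> V \<Longrightarrow> d \<le> card (NG E x)"
    unfolding d_def min_degree_def degeq using nb.finV by (intro Min_le) auto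
  obtain x0 where x0: "x0 \<in> V" "card (NG E x0) = d"
  proof -
    have "d \<in> (\<lambda>x. card (NG E x)) ` V" unfolding d_def min_degree_def degeq
      using nb.finV V0 by (intro Min_in) auto
    thus ?thesis using that by blast
  qed
  have nbx: "NG E x \<noteq> {}" if x: "x \<in> V" for x
  proof -
    obtain y where y: "y \<in> V" "y \<noteq> x"
    proof -
      show ?thesis using that other_vertex[OF m2, of x] by blast
    qed
    have "reachable V E x y" using cg x y by (simp add: connected_graph_def)
    hence "(\<lambda>x y. x \<in> V \<and> y \<in> V \<and> adj E x y)\<^sup>*\<^sup>* x y" by (simp add: reachable_def)
    then obtain z where "adj E x z"
      using y(2) by (cases rule: converse_rtranclpE) auto
    thus ?thesis by (auto simp: NG_def)
  qed
  have d1: "d \<ge> 1" using nbx[OF x0(1)] x0(2) nb.finN by (metis card_0_eq less_one not_le)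
  define lam where "lam = edge_connectivity V E"
  let ?L = "{card S | S. S \<subseteq> E \<and> \<not> connected_graph V (E - S)}"
  have finL: "finite ?L"
  proof -
    have "?L \<subseteq> card ` Pow E" by auto
    thus ?thesis using finE[OF sg] by (meson finite_Pow_iff finite_imageI finite_subset)
  qed
  have lam_le: "lam \<le> card S" if "S \<subseteq> E" "\<not> connected_graph V (E - S)" for S
    unfolding lam_def edge_connectivity_def using finL that by (intro Min_le) auto
  have lamP: "lam \<le> card (Sigma P (\<lambda>x. NG E x - P))" if P: "P \<subseteq> V" "P \<noteq> {}" "V - P \<noteq> {}" for P
  proof -
    define S where "S = (\<lambda>(u,v). {u,v}) ` Sigma P (\<lambda>x. NG E x - P)"
    have SE: "S \<subseteq> E" by (auto simp: S_def NG_def adj_def)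
    have finS: "finite (Sigma P (\<lambda>x. NG E x - P))"
      using nb.finV nb.finN P(1) by (intro finite_SigmaI) (auto intro: finite_subset)
    have "\<not> connected_graph V (E - S)"
    proof
      assume c: "connected_graph V (E - S)"
      obtain u w where uw: "u \<in> P" "w \<in> V" "w \<notin> P" using P by blast
      hence "reachable V (E - S) u w" using c P by (auto simp: connected_graph_def)
      hence "w \<in> P"
      proof (rule reach_stay)
        show "u \<in> P" by fact
        fix u' v assume h: "u' \<in> P" "v \<in> V" "adj (E - S) u' v"
        show "v \<in> P"
        proof (rule ccontr)
          assume "v \<notin> P"
          hence "(u',v) \<in> Sigma P (\<lambda>x. NG E x - P)" using h by (auto simp: NG_def adj_def)
          hence "{u',v} \<in> S" unfolding S_def by force
          thus False using h by (auto simp: adj_def)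
        qed
      qed
      thus False using uw by simp
    qed
    hence "lam \<le> card S" using lam_le SE by blast
    also have "card S \<le> card (Sigma P (\<lambda>x. NG E x - P))" unfolding S_def by (rule card_image_le[OF finS])
    finally show ?thesis .
  qed
  have deg: "\<And>x. x \<in> V \<Longrightarrow> card (NG E x) \<ge> d" using d_le by simp
  have lower: "min (n * n * lam) (2 * (n + n * d) - 4) \<le> card S" if S: "restricted_edge_cut ?VH ?EH S" for S
  proof -
    obtain A where A: "A \<subseteq> ?VH" "2 \<le> card A" "2 \<le> card (?VH - A)" "cut_of ?EH A \<subseteq> S"
      using restricted_cut_side[OF finVH FW S VH0] by blast
    have SEH: "S \<subseteq> ?EH" using S by (simp add: restricted_edge_cut_def)
    have "card (cut_of ?EH A) \<le> card S" using A(4) SEH finEH by (meson card_mono finite_subset)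
    moreover have "card (cut_of ?EH A) = Fg V (NG E) (aA A n) (\<lambda>x. n - aA A n x)"
      by (rule cut_card[OF sg A(1)])
    moreover have "min (n * n * lam) (2 * (n + n * d) - 4) \<le> Fg V (NG E) (aA A n) (\<lambda>x. n - aA A n x)"
    proof (rule nb.core[OF n4 d1 deg lamP])
      show "\<forall>x\<in>V. aA A n x \<le> n" by (simp add: aA_le)
      show "2 \<le> (\<Sum>x\<in>V. aA A n x)" using A(2) cardA[OF nb.finV A(1)] by simp
      show "2 \<le> (\<Sum>x\<in>V. n - aA A n x)" using A(3) cardB[OF nb.finV, of n A] by simp
    qed auto
    ultimately show ?thesis by linarith
  qed
  obtain S1 where S1: "restricted_edge_cut ?VH ?EH S1" "card S1 \<le> n * n * lam"
  proof -
    have discE: "\<not> connected_graph V (E - E)"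
    proof
      assume "connected_graph V (E - E)"
      obtain y where y: "y \<in> V" "y \<noteq> x0"
      proof -
        show ?thesis using that other_vertex[OF m2, of x0] by blast
      qed
      have "reachable V (E - E) x0 y" using \<open>connected_graph V (E - E)\<close> x0 y by (simp add: connected_graph_def)
      hence "(\<lambda>x y. x \<in> V \<and> y \<in> V \<and> adj (E - E) x y)\<^sup>*\<^sup>* x0 y" by (simp add: reachable_def)
      thus False using y(2) by (cases rule: converse_rtranclpE) (auto simp: adj_def)
    qed
    have "lam \<in> ?L" unfolding lam_def edge_connectivity_def using finL discE by (intro Min_in) auto
    then obtain S0 where S0: "S0 \<subseteq> E" "\<not> connected_graph V (E - S0)" "card S0 = lam" by auto
    obtain x y where xy: "x \<in> V" "y \<in> V" "\<not> reachable V (E - S0) x y"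
      using S0(2) V0 by (auto simp: connected_graph_def)
    define C where "C = component V (E - S0) x"
    have CV: "C \<subseteq> V" by (auto simp: C_def component_def)
    have xC: "x \<in> C" using xy by (simp add: C_def component_def reachable_def)
    have yC: "y \<notin> C" using xy by (simp add: C_def component_def)
    define A where "A = C \<times> {0..<n}"
    have AV: "A \<subseteq> ?VH" using CV by (auto simp: A_def)
    have aAC: "aA A n z = (if z \<in> C then n else 0)" for z
    proof (cases "z \<in> C")
      case True
      hence "{y\<in>{0..<n}. (z,y) \<in> A} = {0..<n}" by (auto simp: A_def)
      thus ?thesis using True by (simp add: aA_def)
    next
      case False
      hence "{y\<in>{0..<n}. (z,y) \<in> A} = {}" by (auto simp: A_def)
      thus ?thesis using False by (simp add: aA_def)
    qed
    have Peq: "{z\<in>V. aA A n z = n} = C" using CV n4 by (auto simp: aAC)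
    have "card (cut_of ?EH A) = Fg V (NG E) (aA A n) (\<lambda>x. n - aA A n x)" by (rule cut_card[OF sg AV])
    also have "\<dots> = n * n * card (Sigma C (\<lambda>x. NG E x - C))"
      using nb.nomix[of "aA A n" n] Peq by (simp add: aAC)
    also have "card (Sigma C (\<lambda>x. NG E x - C)) \<le> card S0"
    proof (rule card_inj_on_le[of "\<lambda>(u,v). {u,v}"])
      show "inj_on (\<lambda>(u,v). {u,v}) (Sigma C (\<lambda>x. NG E x - C))"
        by (auto simp: inj_on_def doubleton_eq_iff)
      show "finite S0" using S0(1) finE[OF sg] finite_subset by blast
      show "(\<lambda>(u,v). {u,v}) ` Sigma C (\<lambda>x. NG E x - C) \<subseteq> S0"
      proof
        fix e assume "e \<in> (\<lambda>(u,v). {u,v}) ` Sigma C (\<lambda>x. NG E x - C)"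
        then obtain u v where uv: "e = {u,v}" "u \<in> C" "v \<in> NG E u" "v \<notin> C" by auto
        show "e \<in> S0"
        proof (rule ccontr)
          assume "e \<notin> S0"
          have vV: "v \<in> V" "u \<in> V" using NG_V[OF sg uv(3)] by auto
          have "adj (E - S0) u v" using uv \<open>e \<notin> S0\<close> by (auto simp: NG_def adj_def)
          moreover have "reachable V (E - S0) x u" using uv(2) by (simp add: C_def component_def)
          ultimately have "reachable V (E - S0) x v" using vV unfolding reachable_def
            by (simp add: rtranclp.rtrancl_into_rtrancl)
          hence "v \<in> C" using vV by (simp add: C_def component_def)
          thus False using uv by simp
        qed
      qed
    qed
    finally have c1: "card (cut_of ?EH A) \<le> n * n * lam" using S0(3) by simp
    have r1: "restricted_edge_cut ?VH ?EH (cut_of ?EH A)"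
    proof (rule cut_restricted[OF finVH AV])
      show "(x,0) \<in> A" using xC n4 by (simp add: A_def)
      show "(y,0) \<in> ?VH" "(y,0) \<notin> A" using xy yC n4 by (auto simp: A_def)
      fix v assume v: "v \<in> ?VH"
      obtain z k where vz: "v = (z,k)" by (cases v)
      define w where "w = (z, if k = 0 then 1 else (0::nat))"
      have "w \<in> ?VH" "w \<noteq> v" "{v,w} \<in> ?EH" "v \<in> A \<longleftrightarrow> w \<in> A"
        using v n4 sE_iff[OF sg, of v w n] unfolding w_def vz by (auto simp: A_def)
      thus "\<exists>w\<in>?VH. w \<noteq> v \<and> {v,w} \<in> ?EH \<and> (v \<in> A \<longleftrightarrow> w \<in> A)" by blast
    qed
    show ?thesis using that r1 c1 by blast
  qed
  obtain S2 where S2: "restricted_edge_cut ?VH ?EH S2" "card S2 \<le> 2 * (n + n * d) - 4"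
  proof -
    define A where "A = {(x0,0),(x0,1::nat)}"
    have AV: "A \<subseteq> ?VH" using x0 n4 by (auto simp: A_def)
    have aAx: "aA A n z = (if z = x0 then 2 else 0)" for z
    proof (cases "z = x0")
      case True
      hence "{y\<in>{0..<n}. (z,y) \<in> A} = {0,1}" using n4 by (auto simp: A_def)
      thus ?thesis using True by (simp add: aA_def)
    next
      case False
      hence "{y\<in>{0..<n}. (z,y) \<in> A} = {}" by (auto simp: A_def)
      thus ?thesis using False by (simp add: aA_def)
    qed
    have aAf: "aA A n = (\<lambda>z. if z = x0 then 2 else 0)" using aAx by auto
    let ?g = "\<lambda>x. (n - aA A n x) + (\<Sum>z\<in>NG E x. n - aA A n z)"
    have "Fg V (NG E) (aA A n) (\<lambda>x. n - aA A n x) = (\<Sum>x\<in>V. aA A n x * ?g x)" by (simp add: Fg_def)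
    also have "\<dots> = aA A n x0 * ?g x0 + (\<Sum>x\<in>V - {x0}. aA A n x * ?g x)"
      using x0 nb.finV by (simp add: sum.remove)
    also have "(\<Sum>x\<in>V - {x0}. aA A n x * ?g x) = 0" by (simp add: aAx)
    also have "(\<Sum>z\<in>NG E x0. n - aA A n z) = (\<Sum>z\<in>NG E x0. n)"
      using nb.irr[of x0] by (intro sum.cong refl) (auto simp: aAx)
    finally have "Fg V (NG E) (aA A n) (\<lambda>x. n - aA A n x) = 2 * ((n - 2) + n * d)"
      using x0 by (simp add: aAx aAf mult.commute)
    also have "\<dots> = 2 * (n + n * d) - 4" using n4 by simp
    finally have c2: "card (cut_of ?EH A) = 2 * (n + n * d) - 4" using cut_card[OF sg AV] by simp
    have r2: "restricted_edge_cut ?VH ?EH (cut_of ?EH A)"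
    proof (rule cut_restricted[OF finVH AV])
      show "(x0,0) \<in> A" by (simp add: A_def)
      show "(x0,2) \<in> ?VH" "(x0,2) \<notin> A" using x0 n4 by (auto simp: A_def)
      fix v assume v: "v \<in> ?VH"
      obtain z k where vz: "v = (z,k)" by (cases v)
      define w where "w = (z, if z = x0 then (if k = 0 then 1 else if k = 1 then 0 else if k = 2 then 3 else 2)
                          else (if k = 0 then 1 else (0::nat)))"
      have "w \<in> ?VH" "w \<noteq> v" "{v,w} \<in> ?EH" "v \<in> A \<longleftrightarrow> w \<in> A"
        using v n4 sE_iff[OF sg, of v w n] unfolding w_def vz by (auto simp: A_def)
      thus "\<exists>w\<in>?VH. w \<noteq> v \<and> {v,w} \<in> ?EH \<and> (v \<in> A \<longleftrightarrow> w \<in> A)" by blast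
    qed
    show ?thesis using that r2 c2 by simp
  qed
  have X: "2 * (n + n * d) - 4 \<le> (n - 1) * (card V + 2 * card E)"
  proof -
    let ?m = "card V"
    have "?m * d \<le> (\<Sum>x\<in>V. card (NG E x))"
      using sum_mono[of V "\<lambda>x. d" "\<lambda>x. card (NG E x)"] d_le by simp
    hence me: "?m * d \<le> 2 * card E" using sum_deg_le[OF sg] by linarith
    have "card (NG E x0) \<le> card (V - {x0})"
      using nb.NV nb.irr nb.finV by (intro card_mono) auto
    hence dm: "d + 1 \<le> ?m" using x0 m2 by (simp add: card_Diff_singleton)
    have "(n - 1) * (?m + ?m * d) \<le> (n - 1) * (?m + 2 * card E)" using me by simp
    moreover have "2 * (n + n * d) - 4 \<le> (n - 1) * (?m + ?m * d)"
    proof (cases "?m = 2")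
      case True
      hence "d = 1" using dm d1 by simp
      thus ?thesis using True n4 by (simp add: algebra_simps)
    next
      case False
      hence m3: "3 \<le> ?m" using m2 by simp
      have "2 * n \<le> 3 * (n - 1)" using n4 by simp
      hence "2 * n * (1 + d) \<le> 3 * (n - 1) * (1 + d)" by (rule mult_le_mono1)
      also have "\<dots> \<le> ?m * (n - 1) * (1 + d)" using m3 by (intro mult_le_mono1) simp
      also have "\<dots> = (n - 1) * (?m + ?m * d)"
      proof -
        have "\<And>k::nat. ?m * k * (1 + d) = k * (?m + ?m * d)" by (simp add: algebra_simps)
        thus ?thesis by blast
      qed
      finally have "2 * n * (1 + d) \<le> (n - 1) * (?m + ?m * d)" .
      moreover have "2 * (n + n * d) = 2 * n * (1 + d)" by (simp add: algebra_simps)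
      ultimately show ?thesis by linarith
    qed
    ultimately show ?thesis by linarith
  qed
  let ?R = "{card S | S. restricted_edge_cut ?VH ?EH S}"
  have finR: "finite ?R"
  proof -
    have "?R \<subseteq> card ` Pow ?EH" by (auto simp: restricted_edge_cut_def)
    thus ?thesis using finEH by (meson finite_Pow_iff finite_imageI finite_subset)
  qed
  have R1: "card S1 \<in> ?R" using S1 by blast
  have R2: "card S2 \<in> ?R" using S2 by blast
  have lo: "min (n * n * lam) (2 * (n + n * d) - 4) \<le> Min ?R"
  proof -
    have "Min ?R \<in> ?R" using finR R1 by (intro Min_in) auto
    thus ?thesis using lower by auto
  qed
  have up1: "Min ?R \<le> card S1" using finR R1 by (rule Min_le)
  have up2: "Min ?R \<le> card S2" using finR R2 by (rule Min_le)
  have eqM: "restricted_edge_connectivity (strong_V V (complete_V n)) (strong_E V E (complete_V n) (complete_E n)) = Min ?R"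
    unfolding VH EHd restricted_edge_connectivity_def by simp
  have D: "2 * n * min_degree V E + 2 * n - 4 = 2 * (n + n * d) - 4" by (simp add: d_def algebra_simps)
  have M: "Min ?R = min (n * n * lam) (2 * (n + n * d) - 4)"
  proof (rule antisym)
    show "Min ?R \<le> min (n * n * lam) (2 * (n + n * d) - 4)"
      using le_trans[OF up1 S1(2)] le_trans[OF up2 S2(2)] by simp
  qed (rule lo)
  have M2: "min (n * n * lam) (2 * (n + n * d) - 4) = min (n * n * lam) (min ((n - 1) * (card V + 2 * card E)) (2 * (n + n * d) - 4))"
    using X by (simp add: min_def)
  show ?thesis unfolding eqM D power2_eq_square lam_def[symmetric] M M2 ..
qed


end
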